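(* Let $k\ge 3$ be odd and let $G$ be an odd unicycle graph of girth $k$ with $n=|V(G)|$, whose unique cycle has vertices $u,u_1,\dots,u_{k-1}$ with $\deg u=4$ and $\deg u_i=2$ for $1\le i\le k-1$. Let $F$ be the set of edges of $G$ having no endpoint on the cycle. Let $\det(xI-T)=\sum_{j=0}^n\rho_j x^j$ be the characteristic polynomial of the transition matrix $T$ of $G$. Let $t$ be an integer with $1\le t\le (k-1)/2$. If $2^{k+2t}\rho_{n-k-2t}\in\mathbb{Z}$, then $$2^{2t}\sum_{\{e_1,\dots,e_t\}}\prod_{l=1}^t M(e_l)\in\mathbb{Z},$$ where the sum runs over all $t$-matchings $\{e_1,\dots,e_t\}\subseteq F$.
   Context: Graphs are simple, connected and finite. An odd unicycle graph is a non-bipartite graph with $|V|=|E|$, i.e. a connected graph with exactly one cycle, of odd length (its girth). The transition matrix $T$ on $\mathbb{C}^V$ has entries $T_{a,b}=1/\deg a$ if $a\sim b$ and $0$ otherwise. A $t$-matching is a set of $t$ pairwise disjoint edges. For an edge $e=ab$, $M(e)=\frac{1}{\deg a}\cdot\frac{1}{\deg b}$ (degrees in $G$). *)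

theory Defs
  imports Complex_Main "Jordan_Normal_Form.Char_Poly"
begin

definition simple_graph :: "nat \<Rightarrow> (nat \<Rightarrow> nat \<Rightarrow> bool) \<Rightarrow> bool" where
  "simple_graph n E \<longleftrightarrow> (\<forall>a b. E a b \<longrightarrow> a < n \<and> b < n) \<and> (\<forall>a b. E a b \<longrightarrow> E b a) \<and> (\<forall>a. \<not> E a a)"

definition connected_graph :: "nat \<Rightarrow> (nat \<Rightarrow> nat \<Rightarrow> bool) \<Rightarrow> bool" where
  "connected_graph n E \<longleftrightarrow> 0 < n \<and> (\<forall>a<n. \<forall>b<n. (a, b) \<in> {(x, y). E x y}\<^sup>*)"

definition edges :: "(nat \<Rightarrow> nat \<Rightarrow> bool) \<Rightarrow> nat set set" where
  "edges E = {{a, b} | a b. E a b}"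

definition deg :: "(nat \<Rightarrow> nat \<Rightarrow> bool) \<Rightarrow> nat \<Rightarrow> nat" where
  "deg E a = card {b. E a b}"

definition bipartite :: "nat \<Rightarrow> (nat \<Rightarrow> nat \<Rightarrow> bool) \<Rightarrow> bool" where
  "bipartite n E \<longleftrightarrow> (\<exists>A. \<forall>a b. E a b \<longrightarrow> (a \<in> A \<longleftrightarrow> b \<notin> A))"

definition odd_unicycle :: "nat \<Rightarrow> (nat \<Rightarrow> nat \<Rightarrow> bool) \<Rightarrow> bool" where
  "odd_unicycle n E \<longleftrightarrow> simple_graph n E \<and> connected_graph n E \<and> card (edges E) = n \<and> \<not> bipartite n E"

definition is_cycle :: "(nat \<Rightarrow> nat \<Rightarrow> bool) \<Rightarrow> nat \<Rightarrow> (nat \<Rightarrow> nat) \<Rightarrow> bool" where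
  "is_cycle E k c \<longleftrightarrow> 3 \<le> k \<and> inj_on c {..<k} \<and> (\<forall>i<k. E (c i) (c (Suc i mod k)))"

definition girth :: "(nat \<Rightarrow> nat \<Rightarrow> bool) \<Rightarrow> nat" where
  "girth E = (LEAST k. \<exists>c. is_cycle E k c)"

definition transition_matrix :: "nat \<Rightarrow> (nat \<Rightarrow> nat \<Rightarrow> bool) \<Rightarrow> real mat" where
  "transition_matrix n E = mat n n (\<lambda>(a, b). if E a b then 1 / real (deg E a) else 0)"

text \<open>M(e) = 1/(deg a * deg b) for e = {a,b}.\<close>
definition Mw :: "(nat \<Rightarrow> nat \<Rightarrow> bool) \<Rightarrow> nat set \<Rightarrow> real" where
  "Mw E e = (\<Prod>x\<in>e. 1 / real (deg E x))"

definition matchings :: "nat set set \<Rightarrow> nat \<Rightarrow> nat set set set" where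
  "matchings F t = {S. S \<subseteq> F \<and> card S = t \<and> (\<forall>e\<in>S. \<forall>e'\<in>S. e \<noteq> e' \<longrightarrow> e \<inter> e' = {})}"

end

theory Submission
  imports Defs "HOL-Combinatorics.Cycles"
begin

lemma finite_edges:
  assumes bnd: "\<forall>a b. R a b \<longrightarrow> a < n \<and> b < n"
  shows "finite (edges R)"
proof -
  have "edges R \<subseteq> Pow {0..<n}" using bnd by (auto simp: edges_def)
  then show ?thesis by (rule finite_subset) simp
qed

lemma conn_card_edges:
  assumes bnd: "\<forall>a b. R a b \<longrightarrow> a < n \<and> b < n"
    and conn: "\<forall>a<n. \<forall>b<n. (a, b) \<in> {(x, y). R x y}\<^sup>*"
  shows "n - 1 \<le> card (edges R)"
proof (cases "n = 0")
  case True then show ?thesis by simp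
next
  case False
  let ?r = "{(x, y). R x y}"
  define dist where "dist v = (LEAST m. (v, 0) \<in> ?r ^^ m)" for v
  have ex: "\<exists>w. R v w \<and> dist w < dist v" if v0: "0 < v" and vn: "v < n" for v
  proof -
    have "(v, 0) \<in> ?r\<^sup>*" using conn v0 vn False by auto
    then obtain m where "(v, 0) \<in> ?r ^^ m" using rtrancl_power by blast
    then have d: "(v, 0) \<in> ?r ^^ dist v" unfolding dist_def by (rule LeastI)
    then obtain m' where m': "dist v = Suc m'" using v0 d by (cases "dist v") auto
    with d obtain w where "(v, w) \<in> ?r" "(w, 0) \<in> ?r ^^ m'"
      by (metis relpow_Suc_D2)
    moreover from this(2) have "dist w \<le> m'" unfolding dist_def by (rule Least_le)
    ultimately show ?thesis using m' by auto
  qed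
  define par where "par v = (SOME w. R v w \<and> dist w < dist v)" for v
  have par: "R v (par v) \<and> dist (par v) < dist v" if "0 < v" "v < n" for v
    unfolding par_def using someI_ex[OF ex[OF that]] .
  define f where "f v = {v, par v}" for v
  have "f ` {1..<n} \<subseteq> edges R"
  proof
    fix e assume "e \<in> f ` {1..<n}"
    then obtain v where "v \<in> {1..<n}" "e = {v, par v}" by (auto simp: f_def)
    then show "e \<in> edges R" using par[of v] by (auto simp: edges_def)
  qed
  moreover have "inj_on f {1..<n}"
  proof
    fix v w assume v: "v \<in> {1..<n}" and w: "w \<in> {1..<n}" and e: "f v = f w"
    show "v = w"
    proof (rule ccontr)
      assume "v \<noteq> w"
      then have "v = par w" "w = par v" using e by (auto simp: f_def doubleton_eq_iff)
      then show False using par[of v] par[of w] v w by auto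
    qed
  qed
  ultimately have "card {1..<n} \<le> card (edges R)"
    using card_inj_on_le finite_edges[OF bnd] by blast
  then show ?thesis by simp
qed

lemma remove_edge_conn:
  assumes sym: "\<forall>a b. R a b \<longrightarrow> R b a"
    and path: "(a, b) \<in> {(x, y). R x y \<and> {x, y} \<noteq> {a, b}}\<^sup>*"
  shows "{(x, y). R x y}\<^sup>* \<subseteq> {(x, y). R x y \<and> {x, y} \<noteq> {a, b}}\<^sup>*"
proof -
  let ?s = "{(x, y). R x y \<and> {x, y} \<noteq> {a, b}}"
  have "sym ?s" using sym by (auto simp: sym_def insert_commute)
  then have "sym (?s\<^sup>*)" by (rule sym_rtrancl)
  then have path2: "(b, a) \<in> ?s\<^sup>*" using path by (auto simp: sym_def)
  have "{(x, y). R x y} \<subseteq> ?s\<^sup>*"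
  proof
    fix p assume "p \<in> {(x, y). R x y}"
    then obtain x y where p: "p = (x, y)" "R x y" by auto
    show "p \<in> ?s\<^sup>*"
    proof (cases "{x, y} = {a, b}")
      case True
      then have "(x = a \<and> y = b) \<or> (x = b \<and> y = a)" by (auto simp: doubleton_eq_iff)
      then show ?thesis using p path path2 by auto
    next
      case False then show ?thesis using p by auto
    qed
  qed
  then show ?thesis by (rule rtrancl_subset_rtrancl)
qed

lemma no_extra_cycle:
  assumes sg: "simple_graph n E" and cg: "connected_graph n E" and ce: "card (edges E) = n"
    and eab: "E a b"
    and path: "(a, b) \<in> {(x, y). E x y \<and> {x, y} \<noteq> {a, b}}\<^sup>*"
    and p: "p permutes {0..<n}" and pe: "\<forall>i. p i \<noteq> i \<longrightarrow> E i (p i)"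
    and x1: "p x \<noteq> x" and x2: "p (p x) \<noteq> x"
    and avoid: "\<forall>j. {(p^^j) x, (p^^Suc j) x} \<noteq> {a, b}"
  shows False
proof -
  have bnd: "\<forall>a b. E a b \<longrightarrow> a < n \<and> b < n" and sym: "\<forall>a b. E a b \<longrightarrow> E b a"
    using sg by (auto simp: simple_graph_def)
  define E1 where "E1 u v = (E u v \<and> {u, v} \<noteq> {a, b})" for u v
  have conn1: "\<forall>u<n. \<forall>v<n. (u, v) \<in> {(x, y). E1 x y}\<^sup>*"
    using remove_edge_conn[of E a b, OF sym path] cg unfolding connected_graph_def E1_def by blast
  have sym1: "\<forall>a b. E1 a b \<longrightarrow> E1 b a" using sym by (auto simp: E1_def insert_commute)
  have injp: "inj p" using p permutes_inj by blast
  have moved: "(p^^Suc j) x \<noteq> (p^^j) x" for j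
  proof
    assume "(p^^Suc j) x = (p^^j) x"
    then have "(p^^j) (p x) = (p^^j) x" by (simp add: funpow_swap1)
    then show False using inj_fn[OF injp, of j] x1 by (auto dest: injD)
  qed
  have "permutation p" using p permutes_imp_permutation by blast
  then obtain N where N: "(p^^N) = id" "N > 0" by (rule permutation_is_nilpotent)
  define m where "m = (LEAST m. 0 < m \<and> (p^^m) x = x)"
  have mex: "0 < N \<and> (p^^N) x = x" using N by simp
  have m: "0 < m" "(p^^m) x = x" using LeastI[of "\<lambda>m. 0 < m \<and> (p^^m) x = x", OF mex] by (auto simp: m_def)
  have mmin: "(p^^j) x \<noteq> x" if "0 < j" "j < m" for j
    using not_less_Least[of j "\<lambda>m. 0 < m \<and> (p^^m) x = x"] that by (auto simp: m_def)
  define E2 where "E2 u v = (E1 u v \<and> {u, v} \<noteq> {p x, x})" for u v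
  have walk: "1 \<le> j \<longrightarrow> j \<le> m \<longrightarrow> (p x, (p^^j) x) \<in> {(u, v). E2 u v}\<^sup>*" for j
  proof (induction j)
    case 0 then show ?case by simp
  next
    case (Suc j)
    show ?case
    proof (intro impI)
      assume j1: "1 \<le> Suc j" and jm: "Suc j \<le> m"
      show "(p x, (p^^Suc j) x) \<in> {(u, v). E2 u v}\<^sup>*"
      proof (cases "j = 0")
        case True then show ?thesis by simp
      next
        case False
        define z where "z = (p^^j) x"
        have pz: "p z = (p^^Suc j) x" by (simp add: z_def)
        have "E z (p z)" using pe moved[of j] pz z_def by auto
        moreover have "{z, p z} \<noteq> {a, b}" using avoid pz z_def by metis
        moreover have "z \<noteq> x" using mmin[of j] False jm z_def by auto
        moreover have "\<not> (z = p x \<and> p z = x)" using x2 by auto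
        ultimately have "E2 z (p z)" unfolding E2_def E1_def by (auto simp: doubleton_eq_iff)
        moreover have "(p x, z) \<in> {(u, v). E2 u v}\<^sup>*" using Suc False jm z_def by auto
        ultimately show ?thesis using pz by (metis (mono_tags, lifting) case_prodI mem_Collect_eq rtrancl.rtrancl_into_rtrancl)
      qed
    qed
  qed
  have path2: "(p x, x) \<in> {(u, v). E2 u v}\<^sup>*" using walk[of m] m by auto
  have path2': "(p x, x) \<in> {(u, v). E1 u v \<and> {u, v} \<noteq> {p x, x}}\<^sup>*"
    using path2 unfolding E2_def .
  have conn2: "\<forall>u<n. \<forall>v<n. (u, v) \<in> {(x, y). E2 x y}\<^sup>*"
    using remove_edge_conn[of E1 "p x" x, OF sym1 path2'] conn1 unfolding E2_def by blast
  have bnd2: "\<forall>a b. E2 a b \<longrightarrow> a < n \<and> b < n" using bnd by (auto simp: E2_def E1_def)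
  have c2: "n - 1 \<le> card (edges E2)" by (rule conn_card_edges[OF bnd2 conn2])
  have ed: "edges E2 = edges E - {{a, b}, {p x, x}}"
    unfolding edges_def E2_def E1_def by blast
  have in1: "{a, b} \<in> edges E" using eab by (auto simp: edges_def)
  have in2: "{p x, x} \<in> edges E" using pe x1 sym by (auto simp: edges_def)
  have ne: "{a, b} \<noteq> {p x, x}" using avoid[rule_format, of 0] by (auto simp: insert_commute)
  have fin: "finite (edges E)" by (rule finite_edges[OF bnd])
  have "card (edges E2) = card (edges E) - 2"
    unfolding ed using in1 in2 ne fin by (simp add: card_Diff_subset)
  moreover have "2 \<le> card (edges E)"
  proof -
    have "card {{a, b}, {p x, x}} \<le> card (edges E)" using in1 in2 fin by (intro card_mono) auto
    then show ?thesis using ne by simp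
  qed
  ultimately show False using c2 ce by simp
qed

definition pairs_ok :: "nat set set \<Rightarrow> bool" where
  "pairs_ok S \<longleftrightarrow> (\<forall>e\<in>S. \<exists>a b. e = {a, b} \<and> a \<noteq> b) \<and> (\<forall>e\<in>S. \<forall>e'\<in>S. e \<noteq> e' \<longrightarrow> e \<inter> e' = {})"

definition partner :: "nat set set \<Rightarrow> nat \<Rightarrow> nat" where
  "partner S x = (THE y. {x, y} \<in> S \<and> y \<noteq> x)"

definition sw :: "nat set set \<Rightarrow> nat \<Rightarrow> nat" where
  "sw S x = (if x \<in> \<Union>S then partner S x else x)"

lemma pairs_ok_subset: "pairs_ok S \<Longrightarrow> S' \<subseteq> S \<Longrightarrow> pairs_ok S'"
  unfolding pairs_ok_def by (meson subsetD)

lemma pairs_ok_disj: "pairs_ok S \<Longrightarrow> e \<in> S \<Longrightarrow> e' \<in> S \<Longrightarrow> x \<in> e \<Longrightarrow> x \<in> e' \<Longrightarrow> e = e'"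
  unfolding pairs_ok_def by blast

lemma pairs_ok_two: "pairs_ok S \<Longrightarrow> e \<in> S \<Longrightarrow> \<exists>a b. e = {a, b} \<and> a \<noteq> b"
  unfolding pairs_ok_def by simp

lemma partner_eq:
  assumes "pairs_ok S" "{x, y} \<in> S" "y \<noteq> x"
  shows "partner S x = y"
  unfolding partner_def
proof (rule the_equality)
  show "{x, y} \<in> S \<and> y \<noteq> x" using assms by simp
next
  fix y' assume h: "{x, y'} \<in> S \<and> y' \<noteq> x"
  then have "{x, y'} = {x, y}" using pairs_ok_disj[OF assms(1), of "{x, y'}" "{x, y}" x] assms(2) by simp
  then show "y' = y" using h assms(3) by (simp add: doubleton_eq_iff)
qed

lemma sw_in:
  assumes ok: "pairs_ok S" and x: "x \<in> \<Union>S"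
  shows "{x, sw S x} \<in> S \<and> sw S x \<noteq> x"
proof -
  obtain e where e: "e \<in> S" "x \<in> e" using x by blast
  then obtain a b where ab: "e = {a, b}" "a \<noteq> b" using pairs_ok_two[OF ok] by blast
  define y where "y = (if x = a then b else a)"
  have y: "e = {x, y}" "y \<noteq> x" using ab e(2) by (auto simp: y_def)
  then have "sw S x = y" using partner_eq[OF ok, of x y] e x by (simp add: sw_def)
  then show ?thesis using y e by simp
qed

lemma sw_out: "x \<notin> \<Union>S \<Longrightarrow> sw S x = x"
  by (simp add: sw_def)

lemma sw_eq:
  assumes "pairs_ok S" "{x, y} \<in> S" "x \<noteq> y"
  shows "sw S x = y"
proof -
  have "x \<in> \<Union>S" using assms(2) by blast
  moreover have "partner S x = y" using partner_eq[OF assms(1,2)] assms(3) by simp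
  ultimately show ?thesis by (simp add: sw_def)
qed

lemma sw_props:
  assumes "finite S" "pairs_ok S"
  shows "sw S permutes \<Union>S \<and> sign (sw S) = (-1) ^ card S"
  using assms
proof (induction S rule: finite_induct)
  case empty
  have "sw {} = id" by (auto simp: sw_def)
  then show ?case by (metis permutes_id sign_id card.empty power_0 Union_empty)
next
  case (insert e S)
  have okS: "pairs_ok S" using insert.prems pairs_ok_subset by blast
  note IH = insert.IH[OF okS]
  obtain a b where ab: "e = {a, b}" "a \<noteq> b" using pairs_ok_two[OF insert.prems] by blast
  have disj: "e \<inter> \<Union>S = {}"
  proof (rule ccontr)
    assume "e \<inter> \<Union>S \<noteq> {}"
    then obtain z e' where "z \<in> e" "z \<in> e'" "e' \<in> S" by blast
    then have "e = e'" using pairs_ok_disj[OF insert.prems, of e e' z] by simp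
    then show False using \<open>e' \<in> S\<close> insert.hyps by simp
  qed
  have eq: "sw (insert e S) = transpose a b \<circ> sw S"
  proof
    fix x
    show "sw (insert e S) x = (transpose a b \<circ> sw S) x"
    proof (cases "x \<in> \<Union>S")
      case True
      have "{x, sw S x} \<in> S" "sw S x \<noteq> x" using sw_in[OF okS True] by auto
      then have "sw (insert e S) x = sw S x" using sw_eq[OF insert.prems, of x "sw S x"] by auto
      moreover have "sw S x \<notin> e" using \<open>{x, sw S x} \<in> S\<close> disj by auto
      ultimately show ?thesis using ab by (auto simp: transpose_def)
    next
      case False
      then have sx: "sw S x = x" by (rule sw_out)
      show ?thesis
      proof (cases "x \<in> e")
        case True
        then have "x = a \<or> x = b" using ab by auto
        then show ?thesis using sx sw_eq[OF insert.prems, of a b] sw_eq[OF insert.prems, of b a] ab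
          by (auto simp: transpose_def insert_commute)
      next
        case False
        then have "x \<notin> \<Union>(insert e S)" using \<open>x \<notin> \<Union>S\<close> by auto
        then show ?thesis using sx sw_out False ab by (auto simp: transpose_def)
      qed
    qed
  qed
  have p1: "transpose a b permutes \<Union>(insert e S)" using ab by (intro permutes_swap_id) auto
  have p2: "sw S permutes \<Union>(insert e S)" using IH by (rule permutes_subset[OF conjunct1]) auto
  have fin: "finite (\<Union>(insert e S))"
  proof (rule finite_Union)
    show "finite (insert e S)" using insert.hyps by simp
  next
    fix A assume "A \<in> insert e S"
    then obtain u v where "A = {u, v}" using pairs_ok_two[OF insert.prems] by blast
    then show "finite A" by simp
  qed
  have "sign (transpose a b \<circ> sw S) = sign (transpose a b) * sign (sw S)"
    using p1 p2 fin by (intro sign_compose) (auto intro: permutes_imp_permutation)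
  then have "sign (sw (insert e S)) = (-1) ^ card (insert e S)"
    using eq IH ab insert.hyps by (simp add: sign_swap_id)
  moreover have "sw (insert e S) permutes \<Union>(insert e S)" unfolding eq
    by (rule permutes_compose[OF p2 p1])
  ultimately show ?case by simp
qed

lemma invol_pairs:
  assumes fA: "finite A" and q: "\<forall>x\<in>A. q x \<in> A \<and> q x \<noteq> x \<and> q (q x) = x"
  shows "pairs_ok ((\<lambda>x. {x, q x}) ` A) \<and> \<Union>((\<lambda>x. {x, q x}) ` A) = A \<and> card A = 2 * card ((\<lambda>x. {x, q x}) ` A)"
proof -
  let ?S = "(\<lambda>x. {x, q x}) ` A"
  have ok: "pairs_ok ?S"
    unfolding pairs_ok_def
  proof (intro conjI ballI impI)
    fix e assume "e \<in> ?S"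
    then obtain x where "x \<in> A" "e = {x, q x}" by blast
    moreover have "q x \<noteq> x" using q \<open>x \<in> A\<close> by simp
    ultimately show "\<exists>a b. e = {a, b} \<and> a \<noteq> b" by (intro exI[of _ x] exI[of _ "q x"]) simp
  next
    fix e e' assume "e \<in> ?S" "e' \<in> ?S" "e \<noteq> e'"
    then obtain x y where xy: "x \<in> A" "y \<in> A" "e = {x, q x}" "e' = {y, q y}" by blast
    show "e \<inter> e' = {}"
    proof (rule ccontr)
      assume "e \<inter> e' \<noteq> {}"
      then obtain z where "z \<in> e" "z \<in> e'" by blast
      then have z: "(z = x \<or> z = q x) \<and> (z = y \<or> z = q y)" using xy by simp
      have qq: "q (q x) = x" "q (q y) = y" using q xy by auto
      have "{x, q x} = {y, q y}" using z qq by (metis insert_commute)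
      then show False using xy \<open>e \<noteq> e'\<close> by simp
    qed
  qed
  have un: "\<Union>?S = A"
  proof
    show "\<Union>?S \<subseteq> A" using q by blast
    show "A \<subseteq> \<Union>?S" by blast
  qed
  have "card (\<Union>?S) = sum card ?S"
  proof (rule card_Union_disjoint)
    show "pairwise disjnt ?S" using ok by (simp add: pairs_ok_def pairwise_def disjnt_def)
  next
    fix B assume "B \<in> ?S"
    then obtain x where "B = {x, q x}" by blast
    then show "finite B" by simp
  qed
  also have "\<dots> = sum (\<lambda>_. 2) ?S"
  proof (rule sum.cong)
    fix B assume "B \<in> ?S"
    then obtain x where "x \<in> A" "B = {x, q x}" by blast
    moreover have "q x \<noteq> x" using q \<open>x \<in> A\<close> by simp
    ultimately show "card B = 2" by simp
  qed simp
  finally show ?thesis using ok un by simp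
qed

locale uc =
  fixes n k :: nat and E :: "nat \<Rightarrow> nat \<Rightarrow> bool" and c :: "nat \<Rightarrow> nat"
  assumes sg: "simple_graph n E" and cg: "connected_graph n E" and ce: "card (edges E) = n"
    and k3: "3 \<le> k" and cyc: "is_cycle E k c" and d0: "deg E (c 0) = 4"
    and di: "\<forall>i. 1 \<le> i \<and> i \<le> k - 1 \<longrightarrow> deg E (c i) = 2"
begin

abbreviation "CC \<equiv> c ` {..<k}"
definition "FF = {e \<in> edges E. e \<inter> CC = {}}"
definition "fwd x = (if x \<in> CC then c (Suc (the_inv_into {..<k} c x) mod k) else x)"
definition "P S = fwd \<circ> sw S"
definition "okS S \<longleftrightarrow> S \<subseteq> FF \<and> (\<forall>e\<in>S. \<forall>e'\<in>S. e \<noteq> e' \<longrightarrow> e \<inter> e' = {})"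

lemma bnd: "E a b \<Longrightarrow> a < n \<and> b < n" using sg by (auto simp: simple_graph_def)
lemma symE: "E a b \<Longrightarrow> E b a" using sg by (auto simp: simple_graph_def)
lemma irr: "\<not> E a a" using sg by (auto simp: simple_graph_def)
lemma injc: "inj_on c {..<k}" using cyc by (simp add: is_cycle_def)
lemma cE: "j < k \<Longrightarrow> E (c j) (c (Suc j mod k))" using cyc by (simp add: is_cycle_def)
lemma ceq: "i < k \<Longrightarrow> j < k \<Longrightarrow> c i = c j \<longleftrightarrow> i = j" using injc by (auto dest: inj_onD)
lemma c_lt: "j < k \<Longrightarrow> c j < n" using bnd cE by blast
lemma CC_sub: "CC \<subseteq> {0..<n}" using c_lt by auto
lemma card_CC: "card CC = k" using injc by (simp add: card_image)

lemma suc_mod_inj: "i < k \<Longrightarrow> j < k \<Longrightarrow> Suc i mod k = Suc j mod k \<Longrightarrow> i = j"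
proof -
  assume a: "i < k" "j < k" "Suc i mod k = Suc j mod k"
  consider "Suc i < k" "Suc j < k" | "Suc i = k" "Suc j < k" | "Suc i < k" "Suc j = k" | "Suc i = k" "Suc j = k"
    using a by linarith
  then show "i = j" using a by cases auto
qed

lemma suc_mod_ne: "j < k \<Longrightarrow> Suc j mod k \<noteq> j"
proof -
  assume j: "j < k"
  show ?thesis
  proof (cases "Suc j < k")
    case True then show ?thesis by simp
  next
    case False
    then have "Suc j = k" using j by simp
    then have "Suc j mod k = 0" by simp
    moreover have "j \<noteq> 0" using \<open>Suc j = k\<close> k3 by simp
    ultimately show ?thesis by simp
  qed
qed

lemma fwd_c: "j < k \<Longrightarrow> fwd (c j) = c (Suc j mod k)"
  unfolding fwd_def using the_inv_into_f_f[OF injc] by auto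

lemma fwd_out: "x \<notin> CC \<Longrightarrow> fwd x = x" by (simp add: fwd_def)

lemma fwd_perm: "fwd permutes CC"
proof (rule bij_imp_permutes)
  have inj: "inj_on fwd CC"
  proof
    fix x y assume "x \<in> CC" "y \<in> CC" "fwd x = fwd y"
    obtain i where i: "i < k" "x = c i" using \<open>x \<in> CC\<close> by blast
    obtain j where j: "j < k" "y = c j" using \<open>y \<in> CC\<close> by blast
    have "c (Suc i mod k) = c (Suc j mod k)" using \<open>fwd x = fwd y\<close> fwd_c i j by simp
    moreover have "Suc i mod k \<in> {..<k}" "Suc j mod k \<in> {..<k}" using k3 by auto
    ultimately have "Suc i mod k = Suc j mod k" using inj_onD[OF injc] by blast
    then have "i = j" using suc_mod_inj i j by blast
    then show "x = y" using i j by simp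
  qed
  moreover have "fwd ` CC \<subseteq> CC"
  proof
    fix y assume "y \<in> fwd ` CC"
    then obtain i where i: "i < k" "y = fwd (c i)" by blast
    then have "y = c (Suc i mod k)" using fwd_c by simp
    moreover have "Suc i mod k < k" using k3 by simp
    ultimately show "y \<in> CC" by blast
  qed
  ultimately have "fwd ` CC = CC" by (intro endo_inj_surj) auto
  then show "bij_betw fwd CC CC" using inj by (simp add: bij_betw_def)
next
  show "\<And>x. x \<notin> CC \<Longrightarrow> fwd x = x" by (rule fwd_out)
qed

lemma edges_iff: "e \<in> edges E \<longleftrightarrow> (\<exists>a b. e = {a, b} \<and> E a b)"
  unfolding edges_def by (rule mem_Collect_eq)

lemma okS_edge: "okS S \<Longrightarrow> e \<in> S \<Longrightarrow> \<exists>a b. e = {a, b} \<and> E a b"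
proof -
  assume "okS S" "e \<in> S"
  then have "e \<in> edges E" unfolding okS_def FF_def by blast
  then show ?thesis unfolding edges_iff .
qed

lemma okS_pairs: "okS S \<Longrightarrow> pairs_ok S"
proof -
  assume ok: "okS S"
  have "\<forall>e\<in>S. \<exists>a b. e = {a, b} \<and> a \<noteq> b"
  proof
    fix e assume "e \<in> S"
    then obtain a b where "e = {a, b}" "E a b" using okS_edge[OF ok] by blast
    moreover then have "a \<noteq> b" using irr by auto
    ultimately show "\<exists>a b. e = {a, b} \<and> a \<noteq> b" by blast
  qed
  then show ?thesis using ok unfolding pairs_ok_def okS_def by simp
qed

lemma finite_FF: "finite FF"
proof -
  have "finite (edges E)" using finite_edges[of E n] bnd by blast
  then show ?thesis unfolding FF_def by simp
qed

lemma okS_fin: "okS S \<Longrightarrow> finite S"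
proof -
  assume "okS S"
  then have "S \<subseteq> FF" by (simp add: okS_def)
  then show ?thesis using finite_FF finite_subset by blast
qed

lemma okS_disjC: "okS S \<Longrightarrow> \<Union>S \<inter> CC = {}"
proof -
  assume "okS S"
  then have "\<forall>e\<in>S. e \<inter> CC = {}" unfolding okS_def FF_def by blast
  then show ?thesis by blast
qed

lemma okS_sub: "okS S \<Longrightarrow> \<Union>S \<subseteq> {0..<n}"
proof
  fix x assume ok: "okS S" and "x \<in> \<Union>S"
  then obtain e where "e \<in> S" "x \<in> e" by blast
  then obtain a b where "e = {a, b}" "E a b" using okS_edge[OF ok] by blast
  then show "x \<in> {0..<n}" using bnd \<open>x \<in> e\<close> by auto
qed

lemma okS_card: "okS S \<Longrightarrow> card (\<Union>S) = 2 * card S"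
proof -
  assume ok: "okS S"
  have "card (\<Union>S) = sum card S"
  proof (rule card_Union_disjoint)
    show "pairwise disjnt S" using ok by (simp add: okS_def pairwise_def disjnt_def)
  next
    fix B assume "B \<in> S"
    then obtain u v where "B = {u, v}" using pairs_ok_two[OF okS_pairs[OF ok]] by blast
    then show "finite B" by simp
  qed
  also have "\<dots> = sum (\<lambda>_. 2) S"
  proof (rule sum.cong)
    fix B assume "B \<in> S"
    then obtain u v where "B = {u, v}" "u \<noteq> v" using pairs_ok_two[OF okS_pairs[OF ok]] by blast
    then show "card B = 2" by simp
  qed simp
  finally show ?thesis by simp
qed

lemma P_C: "okS S \<Longrightarrow> x \<in> CC \<Longrightarrow> P S x = fwd x"
proof -
  assume "okS S" "x \<in> CC"
  then have "x \<notin> \<Union>S" using okS_disjC by blast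
  then have "sw S x = x" by (rule sw_out)
  then show ?thesis by (simp add: P_def)
qed

lemma P_cj: "okS S \<Longrightarrow> j < k \<Longrightarrow> P S (c j) = c (Suc j mod k)"
proof -
  assume "okS S" "j < k"
  then have "P S (c j) = fwd (c j)" using P_C by blast
  then show ?thesis using fwd_c[OF \<open>j < k\<close>] by simp
qed

lemma P_U: "okS S \<Longrightarrow> x \<in> \<Union>S \<Longrightarrow> P S x = sw S x"
proof -
  assume ok: "okS S" and x: "x \<in> \<Union>S"
  have "{x, sw S x} \<in> S" using sw_in[OF okS_pairs[OF ok] x] by simp
  then have "sw S x \<in> \<Union>S" by blast
  then have "sw S x \<notin> CC" using okS_disjC[OF ok] by blast
  then show ?thesis by (simp add: P_def fwd_out)
qed

lemma P_out: "x \<notin> CC \<Longrightarrow> x \<notin> \<Union>S \<Longrightarrow> P S x = x"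
  by (simp add: P_def fwd_out sw_out)

lemma P_perm: "okS S \<Longrightarrow> P S permutes {0..<n}"
proof -
  assume ok: "okS S"
  have "sw S permutes \<Union>S" using sw_props[OF okS_fin[OF ok] okS_pairs[OF ok]] by simp
  then have a: "sw S permutes {0..<n}" using okS_sub[OF ok] by (rule permutes_subset)
  have b: "fwd permutes {0..<n}" using fwd_perm CC_sub by (rule permutes_subset)
  show ?thesis unfolding P_def by (rule permutes_compose[OF a b])
qed

lemma P_moved: "okS S \<Longrightarrow> {i. P S i \<noteq> i} = CC \<union> \<Union>S"
proof -
  assume ok: "okS S"
  {
    fix x assume "x \<in> CC"
    then obtain j where "j < k" "x = c j" by auto
    moreover have "Suc j mod k < k" using k3 by simp
    ultimately have "c (Suc j mod k) \<noteq> c j" using ceq suc_mod_ne by metis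
    then have "P S x \<noteq> x" using P_cj[OF ok \<open>j < k\<close>] \<open>x = c j\<close> by simp
  }
  moreover {
    fix x assume "x \<in> \<Union>S"
    then have "P S x \<noteq> x" using P_U[OF ok] sw_in[OF okS_pairs[OF ok]] by metis
  }
  moreover {
    fix x assume "x \<notin> CC" "x \<notin> \<Union>S"
    then have "P S x = x" by (rule P_out)
  }
  ultimately show ?thesis by blast
qed

lemma P_card: "okS S \<Longrightarrow> card {i. P S i \<noteq> i} = k + 2 * card S"
proof -
  assume ok: "okS S"
  have "finite (\<Union>S)" using okS_sub[OF ok] finite_subset by blast
  then have "card (CC \<union> \<Union>S) = card CC + card (\<Union>S)"
    using okS_disjC[OF ok] by (intro card_Un_disjoint) auto
  then show ?thesis using P_moved[OF ok] card_CC okS_card[OF ok] by simp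
qed

lemma P_edge: "okS S \<Longrightarrow> P S i \<noteq> i \<Longrightarrow> E i (P S i)"
proof -
  assume ok: "okS S" and m: "P S i \<noteq> i"
  then have "i \<in> CC \<union> \<Union>S" using P_moved[OF ok] by blast
  then show ?thesis
  proof
    assume "i \<in> CC"
    then obtain j where "j < k" "i = c j" by auto
    then show ?thesis using P_cj[OF ok] cE by simp
  next
    assume u: "i \<in> \<Union>S"
    then have "{i, sw S i} \<in> S" using sw_in[OF okS_pairs[OF ok]] by blast
    then obtain a b where "{i, sw S i} = {a, b}" "E a b" using okS_edge[OF ok] by blast
    then have "E i (sw S i) \<or> E (sw S i) i" by (auto simp: doubleton_eq_iff)
    then have "E i (sw S i)" using symE by blast
    then show ?thesis using P_U[OF ok u] by simp
  qed
qed

lemma P_sign: "okS S \<Longrightarrow> sign (P S) = sign fwd * (-1) ^ card S"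
proof -
  assume ok: "okS S"
  have sp: "sw S permutes \<Union>S" and ss: "sign (sw S) = (-1) ^ card S"
    using sw_props[OF okS_fin[OF ok] okS_pairs[OF ok]] by auto
  have "finite (\<Union>S)" using okS_sub[OF ok] finite_subset by blast
  then have "permutation (sw S)" using sp permutes_imp_permutation by blast
  moreover have "permutation fwd" using fwd_perm permutes_imp_permutation by blast
  ultimately show ?thesis unfolding P_def using ss by (simp add: sign_compose)
qed

lemma P_c0: "okS S \<Longrightarrow> P S (c 0) = c 1"
proof -
  assume ok: "okS S"
  have "0 < k" "Suc 0 mod k = 1" using k3 by auto
  then show ?thesis using P_cj[OF ok, of 0] by simp
qed

lemma P_ck: "okS S \<Longrightarrow> P S (c (k - 1)) = c 0"
proof -
  assume ok: "okS S"
  have "k - 1 < k" "Suc (k - 1) mod k = 0" using k3 by auto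
  then show ?thesis using P_cj[OF ok, of "k - 1"] by simp
qed

lemma P_recover: "okS S \<Longrightarrow> S = (\<lambda>x. {x, P S x}) ` ({i. P S i \<noteq> i} - CC)"
proof -
  assume ok: "okS S"
  have U: "{i. P S i \<noteq> i} - CC = \<Union>S" using P_moved[OF ok] okS_disjC[OF ok] by blast
  show ?thesis unfolding U
  proof
    show "S \<subseteq> (\<lambda>x. {x, P S x}) ` \<Union>S"
    proof
      fix e assume e: "e \<in> S"
      then obtain a b where ab: "e = {a, b}" "a \<noteq> b" using pairs_ok_two[OF okS_pairs[OF ok]] by blast
      then have "sw S a = b" using sw_eq[OF okS_pairs[OF ok]] e by simp
      moreover have "a \<in> \<Union>S" using e ab by blast
      moreover have "P S a = sw S a" using P_U[OF ok \<open>a \<in> \<Union>S\<close>] .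
      ultimately show "e \<in> (\<lambda>x. {x, P S x}) ` \<Union>S" using ab by (intro image_eqI[of _ _ a]) auto
    qed
  next
    show "(\<lambda>x. {x, P S x}) ` \<Union>S \<subseteq> S"
    proof
      fix e assume "e \<in> (\<lambda>x. {x, P S x}) ` \<Union>S"
      then obtain x where x: "x \<in> \<Union>S" "e = {x, P S x}" by blast
      then show "e \<in> S" using P_U[OF ok x(1)] sw_in[OF okS_pairs[OF ok] x(1)] by simp
    qed
  qed
qed

end

lemma W_closed:
  assumes injp: "inj p" and x1: "p x \<noteq> x" and x2: "p (p x) \<noteq> x"
  shows "p ((p^^j) x) \<noteq> (p^^j) x \<and> p (p ((p^^j) x)) \<noteq> (p^^j) x"
proof (induction j)
  case 0 then show ?case using x1 x2 by simp
next
  case (Suc j)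
  let ?y = "(p^^j) x"
  have "p (p ?y) \<noteq> p ?y" using Suc injp by (metis injD)
  moreover have "p (p (p ?y)) \<noteq> p ?y" using Suc injp by (metis injD)
  ultimately show ?case by simp
qed

context uc
begin

lemma inv_facts:
  assumes p: "p permutes {0..<n}" and pe: "\<forall>i. p i \<noteq> i \<longrightarrow> E i (p i)"
  shows "inv_into UNIV p permutes {0..<n} \<and> {i. inv_into UNIV p i \<noteq> i} = {i. p i \<noteq> i} \<and>
         (\<forall>i. inv_into UNIV p i \<noteq> i \<longrightarrow> E i (inv_into UNIV p i)) \<and> sign (inv_into UNIV p) = sign p"
proof (intro conjI)
  show "inv_into UNIV p permutes {0..<n}" using p by (rule permutes_inv)
  have iff: "inv_into UNIV p i = i \<longleftrightarrow> p i = i" for i using permutes_inv_eq[OF p] by blast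
  then show "{i. inv_into UNIV p i \<noteq> i} = {i. p i \<noteq> i}" by blast
  show "\<forall>i. inv_into UNIV p i \<noteq> i \<longrightarrow> E i (inv_into UNIV p i)"
  proof (intro allI impI)
    fix i assume h: "inv_into UNIV p i \<noteq> i"
    define j where "j = inv_into UNIV p i"
    have pj: "p j = i" unfolding j_def using permutes_inverses(1)[OF p] by simp
    then have "p j \<noteq> j" using h j_def by simp
    then have "E j (p j)" using pe by simp
    then show "E i (inv_into UNIV p i)" using pj symE j_def by simp
  qed
  show "sign (inv_into UNIV p) = sign p"
    using p by (intro sign_inverse) (auto intro: permutes_imp_permutation)
qed

lemma cyc_path: "(c 1, c 0) \<in> {(x, y). E x y \<and> {x, y} \<noteq> {c 1, c 0}}\<^sup>*"
proof -
  let ?r = "{(x, y). E x y \<and> {x, y} \<noteq> {c 1, c 0}}"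
  have step: "(c j, c (Suc j mod k)) \<in> ?r" if j: "1 \<le> j" "j < k" for j
  proof -
    have "Suc j mod k < k" using k3 by simp
    have ne: "{c j, c (Suc j mod k)} \<noteq> {c 1, c 0}"
    proof
      assume "{c j, c (Suc j mod k)} = {c 1, c 0}"
      then have "(c j = c 1 \<and> c (Suc j mod k) = c 0) \<or> (c j = c 0 \<and> c (Suc j mod k) = c 1)"
        by (simp add: doubleton_eq_iff)
      then show False
      proof (elim disjE conjE)
        assume h: "c j = c 1" "c (Suc j mod k) = c 0"
        have "j = 1" using ceq[of j 1] j k3 h(1) by simp
        moreover have "Suc 1 mod k = 2" using k3 by simp
        moreover have "c 2 \<noteq> c 0" using ceq[of 2 0] k3 by simp
        ultimately show False using h(2) by simp
      next
        assume h: "c j = c 0" "c (Suc j mod k) = c 1"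
        then show False using ceq[of j 0] j by simp
      qed
    qed
    then show ?thesis using cE[OF j(2)] by simp
  qed
  have walk: "1 \<le> j \<longrightarrow> j < k \<longrightarrow> (c 1, c j) \<in> ?r\<^sup>*" for j
  proof (induction j)
    case 0 then show ?case by simp
  next
    case (Suc j)
    show ?case
    proof (intro impI)
      assume "1 \<le> Suc j" "Suc j < k"
      show "(c 1, c (Suc j)) \<in> ?r\<^sup>*"
      proof (cases "j = 0")
        case True then show ?thesis by simp
      next
        case False
        then have a: "(c 1, c j) \<in> ?r\<^sup>*" using Suc \<open>Suc j < k\<close> by simp
        have "Suc j mod k = Suc j" using \<open>Suc j < k\<close> by simp
        then have b: "(c j, c (Suc j)) \<in> ?r" using step[of j] False \<open>Suc j < k\<close> by simp
        show ?thesis by (rule rtrancl_into_rtrancl[OF a b])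
      qed
    qed
  qed
  have a: "(c 1, c (k - 1)) \<in> ?r\<^sup>*" using walk[of "k - 1"] k3 by simp
  have "Suc (k - 1) mod k = 0" using k3 by simp
  then have b: "(c (k - 1), c 0) \<in> ?r" using step[of "k - 1"] k3 by simp
  show ?thesis by (rule rtrancl_into_rtrancl[OF a b])
qed

lemma nbr:
  assumes J: "1 \<le> J" "J < k"
  shows "{b. E (c J) b} = {c (J - 1), c (Suc J mod k)}"
proof -
  have d: "card {b. E (c J) b} = 2" using di J deg_def by simp
  then have fin: "finite {b. E (c J) b}" by (intro card_ge_0_finite) simp
  have a1: "E (c (J - 1)) (c (Suc (J - 1) mod k))" using cE[of "J - 1"] J by simp
  have "Suc (J - 1) mod k = J" using J by simp
  then have a: "E (c J) (c (J - 1))" using a1 symE by simp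
  have b: "E (c J) (c (Suc J mod k))" using cE[of J] J by simp
  have ne: "c (J - 1) \<noteq> c (Suc J mod k)"
  proof
    assume "c (J - 1) = c (Suc J mod k)"
    moreover have "J - 1 \<in> {..<k}" "Suc J mod k \<in> {..<k}" using J k3 by auto
    ultimately have eq: "J - 1 = Suc J mod k" using inj_onD[OF injc] by blast
    show False
    proof (cases "Suc J < k")
      case True then show False using eq by simp
    next
      case False
      then have "Suc J = k" using J by simp
      then show False using eq k3 J by simp
    qed
  qed
  have sub: "{c (J - 1), c (Suc J mod k)} \<subseteq> {b. E (c J) b}" using a b by simp
  have "card {c (J - 1), c (Suc J mod k)} = 2" using ne by simp
  then show ?thesis using card_subset_eq[OF fin sub] d by simp
qed

end

context uc
begin

lemma moved_sub: "p permutes {0..<n} \<Longrightarrow> {i. p i \<noteq> i} \<subseteq> {0..<n}"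
  using permutes_not_in by fastforce

lemma classify_fwd:
  assumes p: "p permutes {0..<n}" and pe: "\<forall>i. p i \<noteq> i \<longrightarrow> E i (p i)"
    and h0: "p (c 0) = c 1" and h1: "p (c 1) \<noteq> c 0"
  shows "\<exists>S. okS S \<and> p = P S"
proof -
  have injp: "inj p" using p permutes_inj by blast
  have rot: "j < k \<longrightarrow> (\<forall>i\<le>j. p (c i) = c (Suc i mod k))" for j
  proof (induction j)
    case 0
    have "Suc 0 mod k = 1" using k3 by simp
    then show ?case using h0 by simp
  next
    case (Suc j)
    show ?case
    proof (intro impI allI)
      fix i assume Jk: "Suc j < k" and i: "i \<le> Suc j"
      have IH: "\<forall>i\<le>j. p (c i) = c (Suc i mod k)" using Suc Jk by simp
      show "p (c i) = c (Suc i mod k)"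
      proof (cases "i \<le> j")
        case True then show ?thesis using IH by simp
      next
        case False
        then have iJ: "i = Suc j" using i by simp
        have pj: "p (c j) = c (Suc j)" using IH Jk by simp
        have mv: "p (c (Suc j)) \<noteq> c (Suc j)"
        proof
          assume "p (c (Suc j)) = c (Suc j)"
          then have "p (c (Suc j)) = p (c j)" using pj by simp
          then have "c (Suc j) = c j" using injp by (simp add: inj_eq)
          then show False using ceq[of "Suc j" j] Jk by simp
        qed
        then have "E (c (Suc j)) (p (c (Suc j)))" using pe by simp
        then have "p (c (Suc j)) \<in> {c j, c (Suc (Suc j) mod k)}"
          using nbr[of "Suc j"] Jk by auto
        moreover have "p (c (Suc j)) \<noteq> c j"
        proof
          assume hb: "p (c (Suc j)) = c j"
          show False
          proof (cases j)
            case 0 then show False using hb h1 by simp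
          next
            case (Suc j')
            then have "p (c j') = c j" using IH Jk by simp
            then have "p (c (Suc j)) = p (c j')" using hb by simp
            then have "c (Suc j) = c j'" using injp by (simp add: inj_eq)
            then show False using ceq[of "Suc j" j'] Jk Suc by simp
          qed
        qed
        ultimately show ?thesis using iJ by simp
      qed
    qed
  qed
  have pc: "p (c j) = c (Suc j mod k)" if "j < k" for j using rot[of j] that by simp
  define M where "M = {i. p i \<noteq> i}"
  define R where "R = M - CC"
  have Msub: "M \<subseteq> {0..<n}" unfolding M_def using moved_sub[OF p] .
  have finR: "finite R" using Msub unfolding R_def by (meson finite_Diff finite_atLeastLessThan finite_subset)
  have pCC: "p ` CC = CC"
  proof (rule card_subset_eq)
    show "finite CC" by simp
    show "p ` CC \<subseteq> CC"
    proof
      fix y assume "y \<in> p ` CC"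
      then obtain j where j: "j < k" "y = p (c j)" by blast
      then have "y = c (Suc j mod k)" using pc by simp
      moreover have "Suc j mod k < k" using k3 by simp
      ultimately show "y \<in> CC" by blast
    qed
    show "card (p ` CC) = card CC" using injp by (simp add: card_image inj_on_subset)
  qed
  have Rcl: "p x \<in> R" if x: "x \<in> R" for x
  proof -
    have "p x \<notin> CC"
    proof
      assume "p x \<in> CC"
      then have "p x \<in> p ` CC" using pCC by simp
      then have "x \<in> CC" using injp by (auto simp: inj_eq)
      then show False using x R_def by simp
    qed
    moreover have "p (p x) \<noteq> p x" using x injp unfolding R_def M_def by (simp add: inj_eq)
    ultimately show ?thesis unfolding R_def M_def by simp
  qed
  have iterR: "(p^^j) x \<in> R" if "x \<in> R" for x j
    using that by (induction j) (auto intro: Rcl)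
  have inv: "p (p x) = x" if x: "x \<in> R" for x
  proof (rule ccontr)
    assume x2: "p (p x) \<noteq> x"
    have x1: "p x \<noteq> x" using x unfolding R_def M_def by simp
    have avoid: "\<forall>j. {(p^^j) x, (p^^Suc j) x} \<noteq> {c 1, c 0}"
    proof
      fix j
      have "(p^^j) x \<in> R" using iterR[OF x] .
      then have "(p^^j) x \<notin> CC" unfolding R_def by simp
      moreover have "c 1 \<in> CC" "c 0 \<in> CC" using k3 by auto
      ultimately show "{(p^^j) x, (p^^Suc j) x} \<noteq> {c 1, c 0}"
      proof -
        assume a: "(p^^j) x \<notin> CC" "c 1 \<in> CC" "c 0 \<in> CC"
        show ?thesis
        proof
          assume "{(p^^j) x, (p^^Suc j) x} = {c 1, c 0}"
          then have "(p^^j) x \<in> {c 1, c 0}" by (metis insertI1)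
          then have "(p^^j) x = c 1 \<or> (p^^j) x = c 0" by simp
          then show False using a by metis
        qed
      qed
    qed
    have e10: "E (c 1) (c 0)"
    proof -
      have "E (c 0) (c (Suc 0 mod k))" using cE[of 0] k3 by simp
      moreover have "Suc 0 mod k = 1" using k3 by simp
      ultimately show ?thesis using symE by simp
    qed
    show False
      by (rule no_extra_cycle[OF sg cg ce e10 cyc_path p pe x1 x2 avoid])
  qed
  define S where "S = (\<lambda>x. {x, p x}) ` R"
  have Rq: "\<forall>x\<in>R. p x \<in> R \<and> p x \<noteq> x \<and> p (p x) = x"
    using Rcl inv unfolding R_def M_def by simp
  have ip: "pairs_ok S \<and> \<Union>S = R \<and> card R = 2 * card S"
    unfolding S_def by (rule invol_pairs[OF finR Rq])
  have okS: "okS S"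
    unfolding okS_def
  proof (intro conjI)
    show "S \<subseteq> FF"
    proof
      fix e assume "e \<in> S"
      then obtain x where x: "x \<in> R" "e = {x, p x}" unfolding S_def by blast
      have "E x (p x)" using pe x Rq by simp
      then have "e \<in> edges E" using x edges_iff by blast
      moreover have "x \<notin> CC" "p x \<notin> CC" using x Rq unfolding R_def by auto
      ultimately show "e \<in> FF" unfolding FF_def using x by auto
    qed
    show "\<forall>e\<in>S. \<forall>e'\<in>S. e \<noteq> e' \<longrightarrow> e \<inter> e' = {}"
      using ip unfolding pairs_ok_def by simp
  qed
  have "p = P S"
  proof
    fix x
    show "p x = P S x"
    proof (cases "x \<in> CC")
      case True
      then obtain j where "j < k" "x = c j" by blast
      then show ?thesis using pc P_cj[OF okS] by simp
    next
      case False
      show ?thesis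
      proof (cases "x \<in> R")
        case True
        then have "x \<in> \<Union>S" using ip by simp
        then have "P S x = sw S x" using P_U[OF okS] by simp
        moreover have "{x, p x} \<in> S" using True unfolding S_def by blast
        moreover have "x \<noteq> p x" using Rq True by auto
        ultimately show ?thesis using sw_eq[OF conjunct1[OF ip]] by simp
      next
        case xR: False
        then have "p x = x" using False unfolding R_def M_def by simp
        moreover have "x \<notin> \<Union>S" using ip xR by simp
        ultimately show ?thesis using P_out False by simp
      qed
    qed
  qed
  then show ?thesis using okS by blast
qed

lemma classify:
  assumes p: "p permutes {0..<n}" and pe: "\<forall>i. p i \<noteq> i \<longrightarrow> E i (p i)"
    and odd: "odd (card {i. p i \<noteq> i})"
  shows "\<exists>S. okS S \<and> (p = P S \<or> p = inv_into UNIV (P S))"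
proof -
  have injp: "inj p" using p permutes_inj by blast
  obtain x where x1: "p x \<noteq> x" and x2: "p (p x) \<noteq> x"
  proof (rule ccontr)
    assume "\<not> thesis"
    then have h: "\<forall>x. p x \<noteq> x \<longrightarrow> p (p x) = x" using that by blast
    define M where "M = {i. p i \<noteq> i}"
    have finM: "finite M" unfolding M_def using moved_sub[OF p] finite_subset by blast
    have "\<forall>x\<in>M. p x \<in> M \<and> p x \<noteq> x \<and> p (p x) = x"
      using h injp unfolding M_def by (auto simp: inj_eq)
    then have "card M = 2 * card ((\<lambda>x. {x, p x}) ` M)" using invol_pairs[OF finM] by blast
    then show False using odd M_def by simp
  qed
  have e10: "E (c 1) (c 0)"
  proof -
    have "E (c 0) (c (Suc 0 mod k))" using cE[of 0] k3 by simp
    moreover have "Suc 0 mod k = 1" using k3 by simp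
    ultimately show ?thesis using symE by simp
  qed
  have "\<not> (\<forall>j. {(p^^j) x, (p^^Suc j) x} \<noteq> {c 1, c 0})"
    using no_extra_cycle[OF sg cg ce e10 cyc_path p pe x1 x2] by blast
  then obtain j where j: "{(p^^j) x, (p^^Suc j) x} = {c 1, c 0}" by blast
  define y where "y = (p^^j) x"
  have y: "p y \<noteq> y" "p (p y) \<noteq> y" using W_closed[OF injp x1 x2, of j] y_def by auto
  have "{y, p y} = {c 1, c 0}" using j y_def by simp
  then have "(y = c 1 \<and> p y = c 0) \<or> (y = c 0 \<and> p y = c 1)" by (simp add: doubleton_eq_iff)
  then show ?thesis
  proof (elim disjE conjE)
    assume a: "y = c 0" "p y = c 1"
    then have "p (c 0) = c 1" "p (c 1) \<noteq> c 0" using y by auto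
    then show ?thesis using classify_fwd[OF p pe] by blast
  next
    assume a: "y = c 1" "p y = c 0"
    then have b: "p (c 1) = c 0" "p (c 0) \<noteq> c 1" using y by auto
    define q where "q = inv_into UNIV p"
    have qf: "q permutes {0..<n} \<and> {i. q i \<noteq> i} = {i. p i \<noteq> i} \<and> (\<forall>i. q i \<noteq> i \<longrightarrow> E i (q i)) \<and> sign q = sign p"
      unfolding q_def by (rule inv_facts[OF p pe])
    have "q (c 0) = c 1" unfolding q_def using permutes_inv_eq[OF p] b by blast
    moreover have "q (c 1) \<noteq> c 0" unfolding q_def using permutes_inv_eq[OF p] b by blast
    ultimately obtain S where S: "okS S" "q = P S" using classify_fwd qf by blast
    have "bij p" using p permutes_bij by blast
    then have "p = inv_into UNIV q" unfolding q_def by (simp add: inv_inv_eq)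
    then show ?thesis using S by blast
  qed
qed

end

lemma prod_monom_gen:
  assumes "finite I"
  shows "(\<Prod>i\<in>I. monom (a i) (e i)) = monom (\<Prod>i\<in>I. a i) (\<Sum>i\<in>I. e i)"
  using assms by (induction I rule: finite_induct) (auto simp: mult_monom)

lemma coeff_char_poly_zero_diag:
  fixes A :: "'a::comm_ring_1 mat"
  assumes A: "A \<in> carrier_mat n n" and d: "\<forall>i<n. A $$ (i,i) = 0"
  shows "coeff (char_poly A) m = (\<Sum>p\<in>{p. p permutes {0..<n}}. of_int (sign p) *
     (if card {i. i < n \<and> p i = i} = m then (\<Prod>i\<in>{i. i < n \<and> p i \<noteq> i}. - A $$ (i, p i)) else 0))"
proof -
  have dims: "dim_row A = n" "dim_col A = n" using A by auto
  have ent: "char_poly_matrix A $$ (i, p i) = monom (if p i = i then 1 else - A $$ (i, p i)) (if p i = i then 1 else 0)"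
    if "p permutes {0..<n}" "i < n" for p i
  proof -
    have "p i < n" using that permutes_in_image by fastforce
    then show ?thesis using that d dims
      by (auto simp: char_poly_matrix_def monom_0 monom_Suc one_pCons)
  qed
  have prodeq: "(\<Prod>i = 0..<n. char_poly_matrix A $$ (i, p i)) =
     monom (\<Prod>i\<in>{i. i < n \<and> p i \<noteq> i}. - A $$ (i, p i)) (card {i. i < n \<and> p i = i})"
    if p: "p permutes {0..<n}" for p
  proof -
    have "(\<Prod>i = 0..<n. char_poly_matrix A $$ (i, p i)) = (\<Prod>i = 0..<n. monom (if p i = i then 1 else - A $$ (i, p i)) (if p i = i then 1 else 0))"
      using ent[OF p] by (intro prod.cong) auto
    also have "\<dots> = monom (\<Prod>i = 0..<n. (if p i = i then 1 else - A $$ (i, p i))) (\<Sum>i = 0..<n. (if p i = i then 1 else 0))"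
      by (rule prod_monom_gen) simp
    also have "(\<Prod>i = 0..<n. (if p i = i then 1 else - A $$ (i, p i))) = (\<Prod>i\<in>{i. i < n \<and> p i \<noteq> i}. - A $$ (i, p i))"
      by (simp add: prod.If_cases Int_def)
    also have "(\<Sum>i = 0..<n. (if p i = i then 1 else 0)) = card {i. i < n \<and> p i = i}"
      by (simp add: sum.If_cases Int_def)
    finally show ?thesis .
  qed
  have "char_poly A = (\<Sum>p\<in>{p. p permutes {0..<n}}. of_int (sign p) * monom (\<Prod>i\<in>{i. i < n \<and> p i \<noteq> i}. - A $$ (i, p i)) (card {i. i < n \<and> p i = i}))"
  proof -
    have cm: "dim_row (char_poly_matrix A) = n" "dim_col (char_poly_matrix A) = n"
      using char_poly_matrix_closed[OF A] by auto
    show ?thesis unfolding char_poly_def det_def cm using prodeq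
      by (auto intro!: sum.cong)
  qed
  then show ?thesis
    by (simp add: coeff_sum of_int_poly)
qed


lemma prod_neg: "finite A \<Longrightarrow> (\<Prod>i\<in>A. - (f i :: real)) = (-1) ^ card A * (\<Prod>i\<in>A. f i)"
  by (induction A rule: finite_induct) auto

context uc
begin

lemma match_eq: "matchings FF t = {S. okS S \<and> card S = t}"
  unfolding matchings_def okS_def by blast

lemma fin_match: "finite (matchings FF t)"
proof -
  have "matchings FF t \<subseteq> Pow FF" unfolding matchings_def by blast
  then show ?thesis using finite_FF finite_subset by blast
qed

lemma P_inv_c0: "okS S \<Longrightarrow> inv_into UNIV (P S) (c 0) = c (k - 1)"
  using P_ck permutes_inv_eq[OF P_perm] by blast

lemma c1_ne: "c 1 \<noteq> c (k - 1)"
  using ceq[of 1 "k - 1"] k3 by simp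

lemma P_inj: "okS S \<Longrightarrow> okS S' \<Longrightarrow> P S = P S' \<Longrightarrow> S = S'"
  using P_recover by metis

lemma Pinv_inj:
  assumes "okS S" "okS S'" "inv_into UNIV (P S) = inv_into UNIV (P S')"
  shows "S = S'"
proof -
  have "bij (P S)" "bij (P S')" using assms P_perm permutes_bij by blast+
  then have "P S = P S'" using assms(3) by (metis inv_inv_eq)
  then show ?thesis using P_inj assms by blast
qed

lemma prod_CC: "(\<Prod>i\<in>CC. 1 / real (deg E i)) = 1 / 4 * (1 / 2) ^ (k - 1)"
proof -
  have "(\<Prod>i\<in>CC. 1 / real (deg E i)) = (\<Prod>j<k. 1 / real (deg E (c j)))"
    using prod.reindex[OF injc] by simp
  also have "\<dots> = (\<Prod>j\<in>insert 0 {1..<k}. 1 / real (deg E (c j)))"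
  proof -
    have "{..<k} = insert 0 {1..<k}" using k3 by auto
    then show ?thesis by simp
  qed
  also have "\<dots> = 1 / real (deg E (c 0)) * (\<Prod>j\<in>{1..<k}. 1 / real (deg E (c j)))"
    by simp
  also have "(\<Prod>j\<in>{1..<k}. 1 / real (deg E (c j))) = (\<Prod>j\<in>{1..<k}. 1 / 2)"
    using di by (intro prod.cong) auto
  finally show ?thesis using d0 by simp
qed

lemma prod_US: "okS S \<Longrightarrow> (\<Prod>i\<in>\<Union>S. 1 / real (deg E i)) = (\<Prod>e\<in>S. Mw E e)"
proof -
  assume ok: "okS S"
  have "(\<Prod>i\<in>\<Union>S. 1 / real (deg E i)) = (\<Prod>e\<in>S. \<Prod>i\<in>e. 1 / real (deg E i))"
  proof -
    have a: "\<forall>A\<in>S. finite A"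
    proof
      fix A assume "A \<in> S"
      then obtain u v where "A = {u, v}" using pairs_ok_two[OF okS_pairs[OF ok]] by blast
      then show "finite A" by simp
    qed
    have b: "\<forall>A\<in>S. \<forall>B\<in>S. A \<noteq> B \<longrightarrow> A \<inter> B = {}" using ok unfolding okS_def by blast
    show ?thesis using prod.Union_disjoint[OF a b] by simp
  qed
  then show ?thesis unfolding Mw_def .
qed

lemma prod_moved: "okS S \<Longrightarrow> (\<Prod>i\<in>{i. P S i \<noteq> i}. 1 / real (deg E i)) = 1 / 4 * (1 / 2) ^ (k - 1) * (\<Prod>e\<in>S. Mw E e)"
proof -
  assume ok: "okS S"
  have fU: "finite (\<Union>S)" using okS_sub[OF ok] finite_subset by blast
  have "(\<Prod>i\<in>CC \<union> \<Union>S. 1 / real (deg E i)) = (\<Prod>i\<in>CC. 1 / real (deg E i)) * (\<Prod>i\<in>\<Union>S. 1 / real (deg E i))"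
    using okS_disjC[OF ok] fU by (intro prod.union_disjoint) auto
  then show ?thesis using P_moved[OF ok] prod_CC prod_US[OF ok] by simp
qed

end

lemma pow_arith: "k \<ge> 1 \<Longrightarrow> (2::real) ^ (k + 2 * t) * (2 * (1 / 4 * (1 / 2) ^ (k - 1))) = 2 ^ (2 * t)"
proof -
  assume "k \<ge> 1"
  then obtain k' where k: "k = Suc k'" by (cases k) auto
  have "(2::real) ^ (k + 2 * t) * (2 * (1 / 4 * (1 / 2) ^ (k - 1))) = 2 ^ (2 * t) * (2 ^ k' * (1 / 2) ^ k')"
    unfolding k by (simp add: power_add)
  also have "(2::real) ^ k' * (1 / 2) ^ k' = 1" by (simp add: power_mult_distrib[symmetric])
  finally show ?thesis by simp
qed

lemma arith_aux: "(a::nat) + b = n \<Longrightarrow> k + 2 * t \<le> n \<Longrightarrow> (a = n - k - 2 * t \<longleftrightarrow> b = k + 2 * t)"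
  by arith

context uc
begin

lemma main:
  assumes oddk: "odd k"
    and hyp: "2 ^ (k + 2 * t) * coeff (char_poly (transition_matrix n E)) (n - k - 2 * t) \<in> \<int>"
  shows "2 ^ (2 * t) * (\<Sum>S\<in>matchings FF t. \<Prod>e\<in>S. Mw E e) \<in> (\<int> :: real set)"
proof (cases "k + 2 * t \<le> n")
  case False
  have "matchings FF t = {}"
  proof (rule ccontr)
    assume "matchings FF t \<noteq> {}"
    then obtain S where S: "okS S" "card S = t" using match_eq by auto
    have "card {i. P S i \<noteq> i} \<le> card {0..<n}" using moved_sub[OF P_perm[OF S(1)]] by (intro card_mono) auto
    then show False using P_card[OF S(1)] S(2) False by simp
  qed
  then show ?thesis by simp
next
  case True
  define T where "T = transition_matrix n E"
  define m where "m = n - k - 2 * t"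
  have Tc: "T \<in> carrier_mat n n" unfolding T_def transition_matrix_def by simp
  have Tij: "T $$ (i, j) = (if E i j then 1 / real (deg E i) else 0)" if "i < n" "j < n" for i j
    using that unfolding T_def transition_matrix_def by simp
  have Td: "\<forall>i<n. T $$ (i, i) = 0" using Tij irr by simp
  define Perms where "Perms = {p. p permutes {0..<n}}"
  define Good where "Good = {p. p permutes {0..<n} \<and> card {i. p i \<noteq> i} = k + 2 * t \<and> (\<forall>i. p i \<noteq> i \<longrightarrow> E i (p i))}"
  define g where "g p = (of_int (sign p) :: real) * (- (\<Prod>i\<in>{i. p i \<noteq> i}. 1 / real (deg E i)))" for p
  have rho: "coeff (char_poly T) m = (\<Sum>p\<in>Perms. of_int (sign p) * (if card {i. i < n \<and> p i = i} = m then (\<Prod>i\<in>{i. i < n \<and> p i \<noteq> i}. - T $$ (i, p i)) else 0))"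
    unfolding Perms_def by (rule coeff_char_poly_zero_diag[OF Tc Td])
  have tm: "of_int (sign p) * (if card {i. i < n \<and> p i = i} = m then (\<Prod>i\<in>{i. i < n \<and> p i \<noteq> i}. - T $$ (i, p i)) else 0) = (if p \<in> Good then g p else 0)"
    if p: "p \<in> Perms" for p
  proof -
    have pp: "p permutes {0..<n}" using p Perms_def by simp
    have mv: "{i. i < n \<and> p i \<noteq> i} = {i. p i \<noteq> i}" using moved_sub[OF pp] by auto
    have finmv: "finite {i. p i \<noteq> i}" using moved_sub[OF pp] finite_subset by blast
    have "card {i. i < n \<and> p i = i} + card {i. i < n \<and> p i \<noteq> i} = n"
    proof -
      have "{i. i < n \<and> p i = i} \<union> {i. i < n \<and> p i \<noteq> i} = {0..<n}" by auto
      moreover have "{i. i < n \<and> p i = i} \<inter> {i. i < n \<and> p i \<noteq> i} = {}" by auto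
      ultimately show ?thesis
        using card_Un_disjoint[of "{i. i < n \<and> p i = i}" "{i. i < n \<and> p i \<noteq> i}"] by simp
    qed
    then have "card {i. i < n \<and> p i = i} + card {i. p i \<noteq> i} = n" unfolding mv .
    then have cm: "card {i. i < n \<and> p i = i} = m \<longleftrightarrow> card {i. p i \<noteq> i} = k + 2 * t"
      unfolding m_def by (rule arith_aux[OF _ True])
    show ?thesis
    proof (cases "card {i. p i \<noteq> i} = k + 2 * t")
      case False
      then show ?thesis using cm Good_def by simp
    next
      case cT: True
      show ?thesis
      proof (cases "\<forall>i. p i \<noteq> i \<longrightarrow> E i (p i)")
        case eT: True
        have "(\<Prod>i\<in>{i. i < n \<and> p i \<noteq> i}. - T $$ (i, p i)) = (\<Prod>i\<in>{i. p i \<noteq> i}. - (1 / real (deg E i)))"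
          unfolding mv
        proof (rule prod.cong)
          fix i assume "i \<in> {i. p i \<noteq> i}"
          then have "i < n" "p i < n" "E i (p i)" using eT moved_sub[OF pp] permutes_in_image[OF pp] by auto
          then show "- T $$ (i, p i) = - (1 / real (deg E i))" using Tij by simp
        qed simp
        also have "\<dots> = (-1) ^ (k + 2 * t) * (\<Prod>i\<in>{i. p i \<noteq> i}. 1 / real (deg E i))"
          using prod_neg[OF finmv] cT by simp
        also have "(-1 :: real) ^ (k + 2 * t) = -1" using oddk by simp
        finally show ?thesis using cm cT eT Good_def g_def pp by simp
      next
        case eF: False
        then obtain i where i: "p i \<noteq> i" "\<not> E i (p i)" by blast
        then have "i < n" "p i < n" using moved_sub[OF pp] permutes_in_image[OF pp] by auto
        then have "- T $$ (i, p i) = 0" using Tij i by simp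
        moreover have "i \<in> {i. i < n \<and> p i \<noteq> i}" using i \<open>i < n\<close> by simp
        moreover have "finite {i. i < n \<and> p i \<noteq> i}" by simp
        ultimately have "\<exists>a\<in>{i. i < n \<and> p i \<noteq> i}. - T $$ (a, p a) = 0" by blast
        then have "(\<Prod>i\<in>{i. i < n \<and> p i \<noteq> i}. - T $$ (i, p i)) = 0"
          by (rule prod_zero[OF \<open>finite {i. i < n \<and> p i \<noteq> i}\<close>])
        moreover have "p \<notin> Good" using eF unfolding Good_def by blast
        ultimately show ?thesis by simp
      qed
    qed
  qed
  have GoodPerms: "Good \<subseteq> Perms" unfolding Good_def Perms_def by auto
  have finPerms: "finite Perms" unfolding Perms_def by (rule finite_permutations) simp
  have "coeff (char_poly T) m = (\<Sum>p\<in>Perms. if p \<in> Good then g p else 0)"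
    unfolding rho by (rule sum.cong) (use tm in auto)
  also have "\<dots> = (\<Sum>p\<in>Good. g p)"
    using sum.inter_restrict[OF finPerms, of g Good] GoodPerms by (simp add: Int_absorb1)
  finally have rho2: "coeff (char_poly T) m = (\<Sum>p\<in>Good. g p)" .
  define Mt where "Mt = matchings FF t"
  have PE: "\<forall>i. P S i \<noteq> i \<longrightarrow> E i (P S i)" if "okS S" for S using P_edge[OF that] by blast
  have GoodEq: "Good = P ` Mt \<union> (\<lambda>S. inv_into UNIV (P S)) ` Mt"
  proof
    show "Good \<subseteq> P ` Mt \<union> (\<lambda>S. inv_into UNIV (P S)) ` Mt"
    proof
      fix p assume "p \<in> Good"
      then have pp: "p permutes {0..<n}" and pc: "card {i. p i \<noteq> i} = k + 2 * t"
        and pe: "\<forall>i. p i \<noteq> i \<longrightarrow> E i (p i)" unfolding Good_def by auto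
      have "odd (card {i. p i \<noteq> i})" using pc oddk by simp
      then obtain S where S: "okS S" "p = P S \<or> p = inv_into UNIV (P S)" using classify[OF pp pe] by blast
      have "card {i. P S i \<noteq> i} = k + 2 * t"
      proof (cases "p = P S")
        case True then show ?thesis using pc by simp
      next
        case False
        then have "p = inv_into UNIV (P S)" using S by simp
        then have "{i. p i \<noteq> i} = {i. P S i \<noteq> i}" using inv_facts[OF P_perm[OF S(1)] PE[OF S(1)]] by simp
        then show ?thesis using pc by simp
      qed
      then have "card S = t" using P_card[OF S(1)] by simp
      then have "S \<in> Mt" unfolding Mt_def match_eq using S by simp
      then show "p \<in> P ` Mt \<union> (\<lambda>S. inv_into UNIV (P S)) ` Mt" using S by blast
    qed
    show "P ` Mt \<union> (\<lambda>S. inv_into UNIV (P S)) ` Mt \<subseteq> Good"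
    proof
      fix p assume "p \<in> P ` Mt \<union> (\<lambda>S. inv_into UNIV (P S)) ` Mt"
      then obtain S where S: "S \<in> Mt" "p = P S \<or> p = inv_into UNIV (P S)" by blast
      have ok: "okS S" "card S = t" using S unfolding Mt_def match_eq by auto
      note inv = inv_facts[OF P_perm[OF ok(1)] PE[OF ok(1)]]
      show "p \<in> Good" using S(2)
      proof
        assume "p = P S" then show ?thesis unfolding Good_def using P_perm[OF ok(1)] P_card[OF ok(1)] ok(2) PE[OF ok(1)] by simp
      next
        assume "p = inv_into UNIV (P S)" then show ?thesis unfolding Good_def using inv P_card[OF ok(1)] ok(2) by simp
      qed
    qed
  qed
  have disj: "P ` Mt \<inter> (\<lambda>S. inv_into UNIV (P S)) ` Mt = {}"
  proof (rule ccontr)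
    assume "P ` Mt \<inter> (\<lambda>S. inv_into UNIV (P S)) ` Mt \<noteq> {}"
    then obtain S S' where S: "S \<in> Mt" "S' \<in> Mt" "P S = inv_into UNIV (P S')" by blast
    have "okS S" "okS S'" using S unfolding Mt_def match_eq by auto
    then have "P S (c 0) = c 1" "inv_into UNIV (P S') (c 0) = c (k - 1)" using P_c0 P_inv_c0 by auto
    then show False using S(3) c1_ne by simp
  qed
  have inj1: "inj_on P Mt" using P_inj unfolding inj_on_def Mt_def match_eq by blast
  have inj2: "inj_on (\<lambda>S. inv_into UNIV (P S)) Mt" using Pinv_inj unfolding inj_on_def Mt_def match_eq by blast
  have finMt: "finite Mt" using fin_match Mt_def by simp
  define s where "s = (of_int (sign fwd) :: real) * (-1) ^ t"
  define K where "K = (1 / 4 * (1 / 2) ^ (k - 1) :: real)"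
  have gP: "g (P S) = - s * K * (\<Prod>e\<in>S. Mw E e)" "g (inv_into UNIV (P S)) = - s * K * (\<Prod>e\<in>S. Mw E e)"
    if S: "S \<in> Mt" for S
  proof -
    have ok: "okS S" "card S = t" using S unfolding Mt_def match_eq by auto
    note inv = inv_facts[OF P_perm[OF ok(1)] PE[OF ok(1)]]
    show "g (P S) = - s * K * (\<Prod>e\<in>S. Mw E e)"
      unfolding g_def s_def K_def using P_sign[OF ok(1)] prod_moved[OF ok(1)] ok(2) by simp
    show "g (inv_into UNIV (P S)) = - s * K * (\<Prod>e\<in>S. Mw E e)"
      unfolding g_def s_def K_def using inv P_sign[OF ok(1)] prod_moved[OF ok(1)] ok(2) by simp
  qed
  define X where "X = (\<Sum>S\<in>Mt. \<Prod>e\<in>S. Mw E e)"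
  have "(\<Sum>p\<in>Good. g p) = (\<Sum>p\<in>P ` Mt. g p) + (\<Sum>p\<in>(\<lambda>S. inv_into UNIV (P S)) ` Mt. g p)"
    unfolding GoodEq by (rule sum.union_disjoint) (use finMt disj in auto)
  also have "(\<Sum>p\<in>P ` Mt. g p) = (\<Sum>S\<in>Mt. g (P S))" using sum.reindex[OF inj1] by simp
  also have "(\<Sum>p\<in>(\<lambda>S. inv_into UNIV (P S)) ` Mt. g p) = (\<Sum>S\<in>Mt. g (inv_into UNIV (P S)))"
    using sum.reindex[OF inj2] by simp
  also have "(\<Sum>S\<in>Mt. g (P S)) = (\<Sum>S\<in>Mt. - s * K * (\<Prod>e\<in>S. Mw E e))" using gP by simp
  also have "(\<Sum>S\<in>Mt. g (inv_into UNIV (P S))) = (\<Sum>S\<in>Mt. - s * K * (\<Prod>e\<in>S. Mw E e))" using gP by simp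
  finally have sumG: "(\<Sum>p\<in>Good. g p) = (\<Sum>S\<in>Mt. - s * K * (\<Prod>e\<in>S. Mw E e)) + (\<Sum>S\<in>Mt. - s * K * (\<Prod>e\<in>S. Mw E e))" .
  have sX: "(\<Sum>S\<in>Mt. - s * K * (\<Prod>e\<in>S. Mw E e)) = (- s * K) * X"
    unfolding X_def by (rule sum_distrib_left[symmetric])
  have rho3: "coeff (char_poly T) m = - s * (2 * K) * X"
    using rho2 sumG sX by simp
  have ss: "s * s = 1"
  proof -
    have a: "(of_int (sign fwd) :: real) * of_int (sign fwd) = 1"
      by (metis of_int_1 of_int_mult sign_idempotent)
    have b: "((-1 :: real) ^ t) * (-1) ^ t = 1" by (rule minus_one_mult_self)
    have "s * s = ((of_int (sign fwd) :: real) * of_int (sign fwd)) * (((-1 :: real) ^ t) * (-1) ^ t)"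
      unfolding s_def by (simp only: mult_ac)
    then show ?thesis using a b by simp
  qed
  define Z where "Z = 2 ^ (k + 2 * t) * coeff (char_poly T) m"
  have pa: "(2::real) ^ (k + 2 * t) * (2 * K) = 2 ^ (2 * t)" unfolding K_def using pow_arith[of k t] k3 by simp
  have "Z = 2 ^ (k + 2 * t) * (- s * (2 * K) * X)" unfolding Z_def using rho3 by simp
  also have "\<dots> = - s * ((2 ^ (k + 2 * t) * (2 * K)) * X)" by (simp only: mult_ac)
  also have "\<dots> = - s * (2 ^ (2 * t) * X)" unfolding pa ..
  finally have Zeq: "Z = - s * (2 ^ (2 * t) * X)" .
  have "- s * Z = (s * s) * (2 ^ (2 * t) * X)" unfolding Zeq by simp
  then have "2 ^ (2 * t) * X = - s * Z" using ss by simp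
  moreover have "- s \<in> \<int>" unfolding s_def by simp
  moreover have "Z \<in> \<int>" using hyp T_def m_def Z_def by simp
  ultimately have "2 ^ (2 * t) * X \<in> \<int>" by (metis Ints_mult)
  then show ?thesis unfolding X_def Mt_def .
qed

end

theorem lemma3p3:
  fixes n k t :: nat and E :: "nat \<Rightarrow> nat \<Rightarrow> bool" and c :: "nat \<Rightarrow> nat"
  assumes "odd k" and "3 \<le> k"
    and "odd_unicycle n E"
    and "girth E = k"
    and "is_cycle E k c"
    and "deg E (c 0) = 4"
    and "\<forall>i. 1 \<le> i \<and> i \<le> k - 1 \<longrightarrow> deg E (c i) = 2"
    and "1 \<le> t" and "t \<le> (k - 1) div 2"
    and "2 ^ (k + 2 * t) * coeff (char_poly (transition_matrix n E)) (n - k - 2 * t) \<in> \<int>"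
  shows "2 ^ (2 * t) * (\<Sum>S\<in>matchings {e \<in> edges E. e \<inter> c ` {..<k} = {}} t. \<Prod>e\<in>S. Mw E e) \<in> (\<int> :: real set)"
proof -
  have u: "uc n k E c"
    unfolding uc_def using assms(2,3,5,6,7) by (simp add: odd_unicycle_def)
  interpret uc n k E c by (rule u)
  have "2 ^ (2 * t) * (\<Sum>S\<in>matchings FF t. \<Prod>e\<in>S. Mw E e) \<in> (\<int> :: real set)"
    by (rule main[OF assms(1) assms(10)])
  then show ?thesis unfolding FF_def .
qed

end
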